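(* Let $p\geq1$, let $\tau$ be Lebesgue measure on $\mathbb R$, let $\alpha(t)=t+1$, let $w:\mathbb R\to(0,\infty)$ be continuous with $w$ and $1/w$ bounded, and let $T_{\alpha,w}f:=w\cdot(f\circ\alpha)$ on $L^p(\mathbb R,\tau)$. Suppose there is $l\in\mathbb Z$ with $$\beta:=\inf\Big\{\prod_{k=1}^n(w\circ\alpha^{-k})(t):\ t\in[l,l+1],\ n\in\mathbb N\Big\}>0,$$ and let $N\in\mathbb N$ be such that $\alpha^n([l,l+1])\cap[l,l+1]=\varnothing$ for all $n\geq N$. Then the set $$\{f\in L^p(\mathbb R,\tau):\ \|T_{\alpha,w}^nf-\chi_{[l,l+1]}\|_p\geq1\ \text{for all } n\geq N\}$$ is not $\sigma$-porous in $L^p(\mathbb R,\tau)$.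
   Context: $\alpha^{n}(t)=t+n$ and $\alpha^{-k}(t)=t-k$. Porosity: Let $X$ be a metric space and $0<\lambda<1$. A set $E\subseteq X$ is $\lambda$-porous at $x\in E$ if for each $\delta>0$ there is $y\in B(x;\delta)\setminus\{x\}$ with $B(y;\lambda\, d(x,y))\cap E=\varnothing$; $E$ is $\lambda$-porous if it is $\lambda$-porous at each of its points; $E$ is $\sigma$-$\lambda$-porous if it is a countable union of $\lambda$-porous subsets of $X$. A set is called $\sigma$-porous if it is $\sigma$-$\lambda$-porous for some $\lambda\in(0,1)$; "not $\sigma$-porous" means not $\sigma$-$\lambda$-porous for any $\lambda\in(0,1)$. *)

theory Defs
  imports "HOL-Analysis.Analysis"
begin

text \<open>Porosity in a (pseudo)metric space given by a carrier X and a distance d.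
  Points at distance 0 are identified (as in the quotient L^p space), so
  "y different from x" becomes "d x y > 0".\<close>

definition lambda_porous_at ::
  "('a \<Rightarrow> 'a \<Rightarrow> real) \<Rightarrow> 'a set \<Rightarrow> real \<Rightarrow> 'a set \<Rightarrow> 'a \<Rightarrow> bool" where
  "lambda_porous_at d X lam E x \<longleftrightarrow>
     (\<forall>\<delta>>0. \<exists>y\<in>X. 0 < d x y \<and> d x y < \<delta> \<and>
        (\<forall>z\<in>X. d y z < lam * d x y \<longrightarrow> z \<notin> E))"

definition lambda_porous ::
  "('a \<Rightarrow> 'a \<Rightarrow> real) \<Rightarrow> 'a set \<Rightarrow> real \<Rightarrow> 'a set \<Rightarrow> bool" where
  "lambda_porous d X lam E \<longleftrightarrow> (\<forall>x\<in>E. lambda_porous_at d X lam E x)"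

definition sigma_lambda_porous ::
  "('a \<Rightarrow> 'a \<Rightarrow> real) \<Rightarrow> 'a set \<Rightarrow> real \<Rightarrow> 'a set \<Rightarrow> bool" where
  "sigma_lambda_porous d X lam E \<longleftrightarrow>
     (\<exists>A :: nat \<Rightarrow> 'a set. (\<forall>n. A n \<subseteq> X \<and> lambda_porous d X lam (A n)) \<and> E = (\<Union>n. A n))"

definition sigma_porous ::
  "('a \<Rightarrow> 'a \<Rightarrow> real) \<Rightarrow> 'a set \<Rightarrow> 'a set \<Rightarrow> bool" where
  "sigma_porous d X E \<longleftrightarrow> (\<exists>lam. 0 < lam \<and> lam < 1 \<and> sigma_lambda_porous d X lam E)"

definition Lp_set :: "real \<Rightarrow> (real \<Rightarrow> real) set" where
  "Lp_set p = {f. f \<in> borel_measurable lborel \<and> integrable lborel (\<lambda>x. \<bar>f x\<bar> powr p)}"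

definition Lp_dist :: "real \<Rightarrow> (real \<Rightarrow> real) \<Rightarrow> (real \<Rightarrow> real) \<Rightarrow> real" where
  "Lp_dist p f g = (\<integral>x. \<bar>f x - g x\<bar> powr p \<partial>lborel) powr (1 / p)"

definition wshift :: "(real \<Rightarrow> real) \<Rightarrow> (real \<Rightarrow> real) \<Rightarrow> (real \<Rightarrow> real)" where
  "wshift w f = (\<lambda>t. w t * f (t + 1))"

end

theory Submission
  imports Defs
begin

lemma porous_step:
  fixes d :: "'a \<Rightarrow> 'a \<Rightarrow> real"
  assumes d0: "\<And>x. x\<in>X \<Longrightarrow> d x x = 0"
    and dnn: "\<And>x y. x\<in>X \<Longrightarrow> y\<in>X \<Longrightarrow> 0 \<le> d x y"
    and tri: "\<And>x y z. x\<in>X \<Longrightarrow> y\<in>X \<Longrightarrow> z\<in>X \<Longrightarrow> d x z \<le> d x y + d y z"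
    and por: "lambda_porous d X lam A" and AX: "A \<subseteq> X" and lam: "0 < lam" "lam < 1"
    and c: "c \<in> X" and r: "0 < r"
  shows "\<exists>c' r'. c' \<in> X \<and> 0 < r' \<and> r' \<le> r/4 \<and> d c c' + r' \<le> r/2 \<and> (\<forall>z\<in>X. d c' z \<le> r' \<longrightarrow> z \<notin> A)"
proof (cases "\<exists>x\<in>A. d c x < r/4")
  case True
  then obtain x where x: "x \<in> A" "d c x < r/4" by blast
  then have "lambda_porous_at d X lam A x" using por unfolding lambda_porous_def by blast
  then obtain y where y: "y\<in>X" "0 < d x y" "d x y < r/8" "\<forall>z\<in>X. d y z < lam * d x y \<longrightarrow> z \<notin> A"
  proof -
    have "0 < r/8" using r by simp
    then show ?thesis using that \<open>lambda_porous_at d X lam A x\<close> unfolding lambda_porous_at_def by blast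
  qed
  have "d c y \<le> d c x + d x y" using tri c x AX y by blast
  show ?thesis
  proof (intro exI conjI)
    show "y \<in> X" by fact
    have p: "0 < lam * d x y" using lam y by simp
    have h: "lam * d x y < d x y" using lam y by simp
    show "0 < lam * d x y / 2" using p by simp
    show "lam * d x y / 2 \<le> r/4" using h y by linarith
    show "d c y + lam * d x y / 2 \<le> r/2" using \<open>d c y \<le> _\<close> x y h by linarith
    show "\<forall>z\<in>X. d y z \<le> lam * d x y / 2 \<longrightarrow> z \<notin> A"
    proof (intro ballI impI)
      fix z assume "z \<in> X" "d y z \<le> lam * d x y / 2"
      then have "d y z < lam * d x y" using p by linarith
      then show "z \<notin> A" using y(4) \<open>z \<in> X\<close> by blast
    qed
  qed
next
  case False
  show ?thesis
  proof (intro exI conjI)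
    show "c \<in> X" by fact
    show "0 < r/8" using r by simp
    show "r/8 \<le> r/4" using r by simp
    show "d c c + r/8 \<le> r/2" using d0 c r by simp
    show "\<forall>z\<in>X. d c z \<le> r/8 \<longrightarrow> z \<notin> A" using False r by force
  qed
qed

lemma baire_porous:
  fixes d :: "'a \<Rightarrow> 'a \<Rightarrow> real"
  assumes d0: "\<And>x. x\<in>X \<Longrightarrow> d x x = 0"
    and dnn: "\<And>x y. x\<in>X \<Longrightarrow> y\<in>X \<Longrightarrow> 0 \<le> d x y"
    and tri: "\<And>x y z. x\<in>X \<Longrightarrow> y\<in>X \<Longrightarrow> z\<in>X \<Longrightarrow> d x z \<le> d x y + d y z"
    and compl: "\<And>c B. (\<And>k. c k \<in> X) \<Longrightarrow> (\<And>k. d (c k) (c (Suc k)) \<le> B * (1/4)^k)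
                  \<Longrightarrow> \<exists>x\<in>X. (\<lambda>k. d (c k) x) \<longlonglongrightarrow> 0"
    and c0: "c \<in> X" and r: "0 < r" and sub: "\<And>z. z\<in>X \<Longrightarrow> d c z < r \<Longrightarrow> z \<in> E"
  shows "\<not> sigma_porous d X E"
proof
  assume "sigma_porous d X E"
  then obtain lam where lam: "0 < lam" "lam < 1" and slp: "sigma_lambda_porous d X lam E"
    unfolding sigma_porous_def by blast
  have "\<exists>A::nat \<Rightarrow> 'a set. (\<forall>n. A n \<subseteq> X \<and> lambda_porous d X lam (A n)) \<and> E = (\<Union>n. A n)"
    using slp unfolding sigma_lambda_porous_def .
  then obtain A :: "nat \<Rightarrow> 'a set" where AA: "(\<forall>n. A n \<subseteq> X \<and> lambda_porous d X lam (A n)) \<and> E = (\<Union>n. A n)"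
    by (rule exE)
  have A': "\<forall>n. A n \<subseteq> X \<and> lambda_porous d X lam (A n)" using AA by (rule conjunct1)
  have E: "E = (\<Union>n. A n)" using AA by (rule conjunct2)
  have A: "\<And>n. A n \<subseteq> X" "\<And>n. lambda_porous d X lam (A n)" using A' by simp_all
  define Q where "Q k cr cr' \<longleftrightarrow> fst cr' \<in> X \<and> 0 < snd cr' \<and> snd cr' \<le> snd cr/4 \<and>
      d (fst cr) (fst cr') + snd cr' \<le> snd cr/2 \<and> (\<forall>z\<in>X. d (fst cr') z \<le> snd cr' \<longrightarrow> z \<notin> A k)"
    for k and cr cr' :: "'a \<times> real"
  define step where "step k cr = (SOME cr'. Q k cr cr')" for k cr
  have stepP: "Q k cr (step k cr)" if h12: "fst cr \<in> X" "0 < snd cr" for k cr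
  proof -
    obtain c' r' where "c' \<in> X \<and> 0 < r' \<and> r' \<le> snd cr/4 \<and> d (fst cr) c' + r' \<le> snd cr/2 \<and> (\<forall>z\<in>X. d c' z \<le> r' \<longrightarrow> z \<notin> A k)"
      using porous_step[OF d0 dnn tri A(2)[of k] A(1)[of k] lam h12] by blast
    then have "Q k cr (c', r')" unfolding Q_def by simp
    then show ?thesis unfolding step_def by (rule someI)
  qed
  define s where "s = rec_nat (c, r) step"
  define cc where "cc k = fst (s k)" for k
  define rr where "rr k = snd (s k)" for k
  have s0: "cc 0 = c" "rr 0 = r" unfolding cc_def rr_def s_def by simp_all
  have sS: "s (Suc k) = step k (s k)" for k unfolding s_def by simp
  have inv: "cc k \<in> X \<and> 0 < rr k" for k
  proof (induction k)
    case 0 then show ?case using s0 c0 r by simp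
  next
    case (Suc k)
    then have "Q k (s k) (s (Suc k))" unfolding sS cc_def rr_def by (intro stepP) (simp_all add: cc_def rr_def)
    then show ?case unfolding Q_def cc_def rr_def by simp
  qed
  have XX: "cc k \<in> X" for k using inv by blast
  have P: "rr (Suc k) \<le> rr k/4 \<and> d (cc k) (cc (Suc k)) + rr (Suc k) \<le> rr k / 2 \<and>
      (\<forall>z\<in>X. d (cc (Suc k)) z \<le> rr (Suc k) \<longrightarrow> z \<notin> A k)" for k
  proof -
    have "Q k (s k) (s (Suc k))" unfolding sS using inv[of k] unfolding cc_def rr_def by (intro stepP) simp_all
    then show ?thesis unfolding Q_def cc_def rr_def by simp
  qed
  have rbound: "rr k \<le> r * (1/4)^k" for k
  proof (induction k)
    case 0 then show ?case using s0 by simp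
  next
    case (Suc k) then show ?case using P[of k] by simp
  qed
  have dstep: "d (cc k) (cc (Suc k)) \<le> r * (1/4)^k" for k
    using P[of k] rbound[of k] inv[of "Suc k"] by linarith
  obtain x where xX: "x \<in> X" and lim: "(\<lambda>k. d (cc k) x) \<longlonglongrightarrow> 0"
    using compl[of cc r, OF XX dstep] by blast
  have chain: "d (cc k) (cc (k+j)) + rr (k+j) \<le> rr k" for k j
  proof (induction j)
    case 0 then show ?case using d0 inv by simp
  next
    case (Suc j)
    have "d (cc k) (cc (Suc (k+j))) \<le> d (cc k) (cc (k+j)) + d (cc (k+j)) (cc (Suc (k+j)))"
      by (rule tri[OF XX XX XX])
    moreover have "d (cc (k+j)) (cc (Suc (k+j))) + rr (Suc (k+j)) \<le> rr (k+j)"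
      using P[of "k+j"] inv[of "k+j"] by linarith
    ultimately show ?case using Suc by simp
  qed
  have far: "d (cc k) (cc (Suc k + j)) \<le> rr k/2" for k j
  proof -
    have "d (cc k) (cc (Suc k + j)) \<le> d (cc k) (cc (Suc k)) + d (cc (Suc k)) (cc (Suc k + j))"
      by (rule tri[OF XX XX XX])
    moreover have "d (cc (Suc k)) (cc (Suc k + j)) + rr (Suc k + j) \<le> rr (Suc k)" by (rule chain)
    ultimately show ?thesis using P[of k] inv[of "Suc k + j"] by linarith
  qed
  have close: "d (cc k) x \<le> rr k / 2" for k
  proof (rule ccontr)
    assume "\<not> ?thesis"
    then have e: "0 < d (cc k) x - rr k / 2" by simp
    from lim have "\<forall>\<^sub>F j in sequentially. dist (d (cc j) x) 0 < d (cc k) x - rr k / 2"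
      using e tendstoD by blast
    then obtain M where M: "\<And>j. j \<ge> M \<Longrightarrow> dist (d (cc j) x) 0 < d (cc k) x - rr k / 2"
      unfolding eventually_sequentially by blast
    define j where "j = Suc k + M"
    have "d (cc j) x < d (cc k) x - rr k / 2" using M[of j] unfolding j_def by simp
    moreover have "d (cc k) x \<le> d (cc k) (cc j) + d (cc j) x" by (rule tri[OF XX XX xX])
    moreover have "d (cc k) (cc j) \<le> rr k / 2" unfolding j_def by (rule far)
    ultimately show False by linarith
  qed
  have "d c x < r" using close[of 0] s0 r by simp
  then have "x \<in> E" using sub xX by blast
  then obtain m where "x \<in> A m" using E by blast
  moreover have "d (cc (Suc m)) x \<le> rr (Suc m)" using close[of "Suc m"] inv[of "Suc m"] by linarith
  ultimately show False using P[of m] xX by blast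
qed

lemma powr_convex0:
  fixes u v t p :: real
  assumes p: "p \<ge> 1" and u: "0 \<le> u" and v: "0 \<le> v" and t: "0 \<le> t" "t \<le> 1"
  shows "(t * u + (1 - t) * v) powr p \<le> t * u powr p + (1 - t) * v powr p"
proof -
  have tp: "s powr p \<le> s" if "0 \<le> s" "s \<le> 1" for s
  proof (cases "s = 0")
    case False
    have "s powr p = s * s powr (p - 1)" using powr_mult_base[of s "p-1"] that by simp
    also have "\<dots> \<le> s * 1" using that False p by (intro mult_mono powr_le1) auto
    finally show ?thesis by simp
  qed simp
  consider "u = 0" | "v = 0" | "0 < u" "0 < v" using u v by linarith
  then show ?thesis
  proof cases
    case 1
    have "((1 - t) * v) powr p = (1 - t) powr p * v powr p" by (rule powr_mult)
    also have "\<dots> \<le> (1 - t) * v powr p" using t by (intro mult_right_mono tp) auto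
    finally show ?thesis using 1 by simp
  next
    case 2
    have "(t * u) powr p = t powr p * u powr p" by (rule powr_mult)
    also have "\<dots> \<le> t * u powr p" using t by (intro mult_right_mono tp) auto
    finally show ?thesis using 2 by simp
  next
    case 3
    have "convex_on {0<..} (\<lambda>x::real. x powr p)" by (rule powr_convex[OF p])
    from convex_onD[OF this, of "1 - t" u v] 3 t
    show ?thesis by (simp add: algebra_simps)
  qed
qed

lemma pw_bound:
  fixes x y A B p :: real
  assumes p: "p \<ge> 1" and A: "0 < A" and B: "0 < B"
  shows "\<bar>x + y\<bar> powr p \<le> (A + B) powr p * ((A/(A+B)) * (\<bar>x\<bar>/A) powr p + (B/(A+B)) * (\<bar>y\<bar>/B) powr p)"
proof -
  define t where "t = A/(A+B)"
  have t: "0 \<le> t" "t \<le> 1" "1 - t = B/(A+B)" using A B by (auto simp: t_def field_simps)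
  have "(A + B) * (t * (\<bar>x\<bar>/A) + (1 - t) * (\<bar>y\<bar>/B)) = \<bar>x\<bar> + \<bar>y\<bar>"
  proof -
    have 1: "t * (\<bar>x\<bar>/A) = \<bar>x\<bar>/(A+B)" using A B by (simp add: t_def)
    have 2: "(1 - t) * (\<bar>y\<bar>/B) = \<bar>y\<bar>/(A+B)" using A B unfolding t(3) by simp
    have "A + B \<noteq> 0" using A B by simp
    then show ?thesis unfolding 1 2 by (simp add: add_divide_distrib[symmetric])
  qed
  then have "\<bar>x + y\<bar> \<le> (A + B) * (t * (\<bar>x\<bar>/A) + (1 - t) * (\<bar>y\<bar>/B))"
    by (simp add: abs_triangle_ineq)
  then have "\<bar>x + y\<bar> powr p \<le> ((A + B) * (t * (\<bar>x\<bar>/A) + (1 - t) * (\<bar>y\<bar>/B))) powr p"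
    using p by (intro powr_mono2) auto
  also have "\<dots> = (A + B) powr p * (t * (\<bar>x\<bar>/A) + (1 - t) * (\<bar>y\<bar>/B)) powr p" by (rule powr_mult)
  also have "\<dots> \<le> (A + B) powr p * (t * (\<bar>x\<bar>/A) powr p + (1 - t) * (\<bar>y\<bar>/B) powr p)"
    using A B t p by (intro mult_left_mono powr_convex0) auto
  finally show ?thesis using t by (simp add: t_def)
qed

lemma pw_bound2:
  fixes x y p :: real
  assumes p: "p \<ge> 1"
  shows "\<bar>x + y\<bar> powr p \<le> 2 powr p * (\<bar>x\<bar> powr p + \<bar>y\<bar> powr p)"
proof -
  have "\<bar>x + y\<bar> powr p \<le> (1 + 1) powr p * ((1/(1+1)) * (\<bar>x\<bar>/1) powr p + (1/(1+1)) * (\<bar>y\<bar>/1) powr p)"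
    by (rule pw_bound[OF p]) auto
  also have "\<dots> = 2 powr p * ((\<bar>x\<bar> powr p + \<bar>y\<bar> powr p) / 2)" by (simp add: algebra_simps)
  also have "\<dots> \<le> 2 powr p * (\<bar>x\<bar> powr p + \<bar>y\<bar> powr p)"
    by (intro mult_left_mono) auto
  finally show ?thesis .
qed

lemma pw_bound':
  fixes x y A B p :: real
  assumes p: "p \<ge> 1" and A: "0 < A" and B: "0 < B"
  shows "\<bar>x + y\<bar> powr p \<le> (A + B) powr p * ((A/(A+B)/A powr p) * \<bar>x\<bar> powr p + (B/(A+B)/B powr p) * \<bar>y\<bar> powr p)"
  using pw_bound[OF p A B, of x y] A B by (simp add: powr_divide)

definition Np :: "real \<Rightarrow> (real \<Rightarrow> real) \<Rightarrow> real" where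
  "Np p f = (\<integral>x. \<bar>f x\<bar> powr p \<partial>lborel) powr (1 / p)"

lemma Np_nonneg: "0 \<le> Np p f" by (simp add: Np_def)

lemma Np_powr: assumes "p \<ge> 1" shows "Np p f powr p = (\<integral>x. \<bar>f x\<bar> powr p \<partial>lborel)"
proof -
  have "0 \<le> (\<integral>x. \<bar>f x\<bar> powr p \<partial>lborel)" by (intro integral_nonneg_AE) simp
  then show ?thesis using assms by (simp add: Np_def powr_powr)
qed

lemma Lp_dist_Np: "Lp_dist p f g = Np p (\<lambda>x. f x - g x)"
  by (simp add: Lp_dist_def Np_def)

lemma minkowski:
  assumes p: "p \<ge> 1" and f: "f \<in> Lp_set p" and g: "g \<in> Lp_set p"
  shows "(\<lambda>x. f x + g x) \<in> Lp_set p" and "Np p (\<lambda>x. f x + g x) \<le> Np p f + Np p g"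
proof -
  have fm[measurable]: "f \<in> borel_measurable lborel" and fi: "integrable lborel (\<lambda>x. \<bar>f x\<bar> powr p)"
    using f by (auto simp: Lp_set_def)
  have gm[measurable]: "g \<in> borel_measurable lborel" and gi: "integrable lborel (\<lambda>x. \<bar>g x\<bar> powr p)"
    using g by (auto simp: Lp_set_def)
  define a where "a = Np p f"
  define b where "b = Np p g"
  have a0: "0 \<le> a" and b0: "0 \<le> b" by (simp_all add: a_def b_def Np_nonneg)
  have If: "(\<integral>x. \<bar>f x\<bar> powr p \<partial>lborel) = a powr p" using Np_powr[OF p] by (simp add: a_def)
  have Ig: "(\<integral>x. \<bar>g x\<bar> powr p \<partial>lborel) = b powr p" using Np_powr[OF p] by (simp add: b_def)
  have key: "integrable lborel (\<lambda>x. \<bar>f x + g x\<bar> powr p) \<and>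
      (\<integral>x. \<bar>f x + g x\<bar> powr p \<partial>lborel) \<le> (a + b + 2 * e) powr p" if e: "0 < e" for e
  proof -
    define A where "A = a + e"
    define B where "B = b + e"
    have A: "0 < A" and B: "0 < B" using a0 b0 e by (simp_all add: A_def B_def)
    define ca where "ca = A/(A+B)/A powr p"
    define cb where "cb = B/(A+B)/B powr p"
    have ca0: "0 \<le> ca" and cb0: "0 \<le> cb" using A B by (simp_all add: ca_def cb_def)
    define h where "h x = (A + B) powr p * (ca * \<bar>f x\<bar> powr p + cb * \<bar>g x\<bar> powr p)" for x
    have hi: "integrable lborel h" unfolding h_def using fi gi by (intro integrable_mult_right integrable_add) auto
    have hb: "\<bar>f x + g x\<bar> powr p \<le> h x" for x
      unfolding h_def ca_def cb_def by (rule pw_bound'[OF p A B])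
    have ii: "integrable lborel (\<lambda>x. \<bar>f x + g x\<bar> powr p)"
      by (rule Bochner_Integration.integrable_bound[OF hi]) (auto intro!: AE_I2 order_trans[OF hb abs_ge_self])
    have "(\<integral>x. \<bar>f x + g x\<bar> powr p \<partial>lborel) \<le> integral\<^sup>L lborel h"
      by (rule integral_mono[OF ii hi hb])
    also have "\<dots> = (A + B) powr p * (ca * a powr p + cb * b powr p)"
      unfolding h_def using fi gi If Ig by simp
    also have "\<dots> \<le> (A + B) powr p * 1"
    proof (intro mult_left_mono)
      have "a powr p \<le> A powr p" "b powr p \<le> B powr p" using a0 b0 e p
        by (auto intro!: powr_mono2 simp: A_def B_def)
      then have "ca * a powr p \<le> A/(A+B)" "cb * b powr p \<le> B/(A+B)"
        using A B by (auto simp: ca_def cb_def divide_le_eq mult_le_cancel_left)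
      moreover have "A/(A+B) + B/(A+B) = 1" using A B by (simp add: add_divide_distrib[symmetric])
      ultimately show "ca * a powr p + cb * b powr p \<le> 1" by linarith
    qed simp
    also have "(A + B) = a + b + 2 * e" by (simp add: A_def B_def)
    finally show ?thesis using ii by simp
  qed
  show "(\<lambda>x. f x + g x) \<in> Lp_set p" using key[of 1] by (simp add: Lp_set_def)
  show "Np p (\<lambda>x. f x + g x) \<le> Np p f + Np p g"
  proof (rule field_le_epsilon)
    fix e :: real assume e: "0 < e"
    have "Np p (\<lambda>x. f x + g x) \<le> ((a + b + 2 * (e/2)) powr p) powr (1/p)"
      unfolding Np_def using key[of "e/2"] e p by (intro powr_mono2) auto
    also have "\<dots> = a + b + e" using a0 b0 e p by (simp add: powr_powr)
    finally show "Np p (\<lambda>x. f x + g x) \<le> Np p f + Np p g + e" by (simp add: a_def b_def)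
  qed
qed

lemma powr_le_self: fixes s p :: real assumes "p \<ge> 1" "0 \<le> s" "s \<le> 1" shows "s powr p \<le> s"
proof (cases "s = 0")
  case False
  have "s powr p = s * s powr (p - 1)" using powr_mult_base[of s "p-1"] assms by simp
  also have "\<dots> \<le> s * 1" using assms False by (intro mult_mono powr_le1) auto
  finally show ?thesis by simp
qed simp

lemma Lp_neg: "f \<in> Lp_set p \<Longrightarrow> (\<lambda>x. - f x) \<in> Lp_set p"
  by (simp add: Lp_set_def)

lemma Lp_diff: assumes "p \<ge> 1" "f \<in> Lp_set p" "g \<in> Lp_set p" shows "(\<lambda>x. f x - g x) \<in> Lp_set p"
  using minkowski(1)[OF assms(1,2) Lp_neg[OF assms(3)]] by simp

lemma Lp_dist_nonneg: "0 \<le> Lp_dist p f g" by (simp add: Lp_dist_def)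

lemma Lp_dist_self: "Lp_dist p f f = 0" by (simp add: Lp_dist_def)

lemma Lp_dist_sym: "Lp_dist p f g = Lp_dist p g f" by (simp add: Lp_dist_def abs_minus_commute)

lemma Lp_tri: assumes "p \<ge> 1" "f \<in> Lp_set p" "g \<in> Lp_set p" "h \<in> Lp_set p"
  shows "Lp_dist p f h \<le> Lp_dist p f g + Lp_dist p g h"
proof -
  have "Lp_dist p f h = Np p (\<lambda>x. (f x - g x) + (g x - h x))" by (simp add: Lp_dist_Np)
  also have "\<dots> \<le> Np p (\<lambda>x. f x - g x) + Np p (\<lambda>x. g x - h x)"
    by (intro minkowski(2) Lp_diff assms)
  finally show ?thesis by (simp add: Lp_dist_Np)
qed

lemma Lp_dist_powr: assumes "p \<ge> 1" shows "Lp_dist p f g powr p = (\<integral>x. \<bar>f x - g x\<bar> powr p \<partial>lborel)"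
  using Np_powr[OF assms] by (simp add: Lp_dist_Np)

lemma ae_summable:
  fixes g :: "nat \<Rightarrow> real \<Rightarrow> real"
  assumes p: "p \<ge> 1" and gm[measurable]: "\<And>k. g k \<in> borel_measurable lborel"
    and gi: "\<And>k. integrable lborel (\<lambda>x. \<bar>g k x\<bar> powr p)"
    and gb: "\<And>k. (\<integral>x. \<bar>g k x\<bar> powr p \<partial>lborel) \<le> C * (1/4)^k" and C: "0 \<le> C"
  shows "AE x in lborel. summable (\<lambda>k. \<bar>g k x\<bar>)"
proof -
  define F where "F x = (\<Sum>k. ennreal (2^k * \<bar>g k x\<bar> powr p))" for x
  have Fm: "F \<in> borel_measurable lborel" unfolding F_def by measurable
  have "(\<integral>\<^sup>+x. F x \<partial>lborel) = (\<Sum>k. \<integral>\<^sup>+x. ennreal (2^k * \<bar>g k x\<bar> powr p) \<partial>lborel)"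
    unfolding F_def by (rule nn_integral_suminf) measurable
  also have "\<dots> = (\<Sum>k. ennreal (2^k * (\<integral>x. \<bar>g k x\<bar> powr p \<partial>lborel)))"
    by (intro arg_cong[where f=suminf] ext, subst nn_integral_eq_integral) (auto intro!: gi)
  also have "\<dots> \<le> (\<Sum>k. ennreal (C * (1/2)^k))"
  proof (intro suminf_le summableI)
    fix k
    have "2^k * (\<integral>x. \<bar>g k x\<bar> powr p \<partial>lborel) \<le> 2^k * (C * (1/4)^k)"
      using gb[of k] by (intro mult_left_mono) auto
    also have "\<dots> = C * (1/2)^k" by (simp add: power_divide field_simps power_mult_distrib[symmetric])
    finally show "ennreal (2^k * (\<integral>x. \<bar>g k x\<bar> powr p \<partial>lborel)) \<le> ennreal (C * (1/2)^k)"
      by (rule ennreal_leI)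
  qed
  finally have le: "(\<integral>\<^sup>+x. F x \<partial>lborel) \<le> (\<Sum>k. ennreal (C * (1/2)^k))" .
  have sc: "summable (\<lambda>k. C * (1/2::real)^k)" by (intro summable_mult summable_geometric) auto
  have ne: "(\<Sum>k. ennreal (C * (1/2)^k)) \<noteq> top"
    by (rule ennreal_suminf_neq_top[OF sc]) (use C in simp)
  have "(\<integral>\<^sup>+x. F x \<partial>lborel) \<noteq> top"
  proof
    assume "(\<integral>\<^sup>+x. F x \<partial>lborel) = top"
    then show False using le ne by (simp add: top_unique)
  qed
  then have "(\<integral>\<^sup>+x. F x \<partial>lborel) \<noteq> \<infinity>" by simp
  from nn_integral_PInf_AE[OF Fm this]
  show ?thesis
  proof eventually_elim
    fix x assume "F x \<noteq> \<infinity>"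
    then have sm: "summable (\<lambda>k. 2^k * \<bar>g k x\<bar> powr p)"
      unfolding F_def by (intro summable_suminf_not_top) auto
    define S where "S = (\<Sum>k. 2^k * \<bar>g k x\<bar> powr p)"
    define q :: real where "q = (1/2) powr (1/p)"
    have q: "0 \<le> q" "q < 1" using p unfolding q_def
      using powr_less_mono2[of "1/p" "1/2" 1] by auto
    have bnd: "\<bar>g k x\<bar> \<le> q^k * S powr (1/p)" for k
    proof -
      have "2^k * \<bar>g k x\<bar> powr p \<le> S"
        using sum_le_suminf[OF sm, of "{k}"] unfolding S_def by simp
      then have "(1/2)^k * (2^k * \<bar>g k x\<bar> powr p) \<le> (1/2)^k * S" by (intro mult_left_mono) auto
      moreover have "(1/2::real)^k * 2^k = 1" by (simp add: power_mult_distrib[symmetric])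
      then have "(1/2)^k * (2^k * \<bar>g k x\<bar> powr p) = \<bar>g k x\<bar> powr p"
        by (simp only: mult.assoc[symmetric])
      ultimately have le: "\<bar>g k x\<bar> powr p \<le> (1/2)^k * S" by simp
      have "\<bar>g k x\<bar> = (\<bar>g k x\<bar> powr p) powr (1/p)" using p by (simp add: powr_powr)
      also have "\<dots> \<le> ((1/2)^k * S) powr (1/p)" using le p by (intro powr_mono2) auto
      also have "\<dots> = ((1/2)^k) powr (1/p) * S powr (1/p)" by (rule powr_mult)
      also have "((1/2::real)^k) powr (1/p) = q^k"
      proof -
        have "((1/2::real)^k) powr (1/p) = ((1/2) powr real k) powr (1/p)" by (simp add: powr_realpow)
        also have "\<dots> = (1/2) powr (real k * (1/p))" by (simp add: powr_powr)
        also have "\<dots> = q^k" unfolding q_def by (simp add: powr_power)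
        finally show ?thesis .
      qed
      finally show ?thesis .
    qed
    show "summable (\<lambda>k. \<bar>g k x\<bar>)"
    proof (rule summable_comparison_test)
      show "\<exists>N. \<forall>n\<ge>N. norm \<bar>g n x\<bar> \<le> q^n * S powr (1/p)" using bnd by auto
      show "summable (\<lambda>n. q^n * S powr (1/p))" using q by (intro summable_mult2 summable_geometric) auto
    qed
  qed
qed

lemma Lp_complete:
  fixes c :: "nat \<Rightarrow> real \<Rightarrow> real"
  assumes p: "p \<ge> 1" and c: "\<And>k. c k \<in> Lp_set p"
    and dc: "\<And>k. Lp_dist p (c k) (c (Suc k)) \<le> B * (1/4)^k"
  shows "\<exists>x\<in>Lp_set p. (\<lambda>k. Lp_dist p (c k) x) \<longlonglongrightarrow> 0"
proof -
  have cm[measurable]: "\<And>k. c k \<in> borel_measurable lborel" using c by (simp add: Lp_set_def)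
  have ci: "\<And>k. integrable lborel (\<lambda>x. \<bar>c k x\<bar> powr p)" using c by (simp add: Lp_set_def)
  have B0: "0 \<le> B" using dc[of 0] Lp_dist_nonneg[of p "c 0" "c 1"] by simp
  have chain: "Lp_dist p (c k) (c (k+m)) \<le> 2*B*(1/4)^k - 2*B*(1/4)^(k+m)" for k m
  proof (induction m)
    case 0 show ?case by (simp add: Lp_dist_self)
  next
    case (Suc m)
    have "Lp_dist p (c k) (c (k + Suc m)) \<le> Lp_dist p (c k) (c (k+m)) + Lp_dist p (c (k+m)) (c (Suc (k+m)))"
      using Lp_tri[OF p c c c] by simp
    also have "\<dots> \<le> 2*B*(1/4)^k - 2*B*(1/4)^(k+m) + B*(1/4)^(k+m)" using Suc dc[of "k+m"] by linarith
    also have "\<dots> \<le> 2*B*(1/4)^k - 2*B*(1/4)^(k + Suc m)"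
    proof -
      have e: "2*B*(1/4::real)^(k + Suc m) = (B*(1/4)^(k+m)) / 2" by simp
      have "0 \<le> B*(1/4::real)^(k+m)" using B0 by simp
      then show ?thesis unfolding e by linarith
    qed
    finally show ?case .
  qed
  have chain': "Lp_dist p (c k) (c j) \<le> 2*B*(1/4)^k" if kj: "k \<le> j" for k j
  proof -
    obtain m where "j = k + m" using le_Suc_ex[OF kj] by blast
    moreover have "0 \<le> 2*B*(1/4::real)^(k+m)" using B0 by simp
    ultimately show ?thesis using chain[of k m] by (simp only:)
  qed
  define g where "g = (\<lambda>k x. c (Suc k) x - c k x)"
  have gL: "g k \<in> Lp_set p" for k unfolding g_def by (rule Lp_diff[OF p c c])
  have gm[measurable]: "g k \<in> borel_measurable lborel" for k using gL by (simp add: Lp_set_def)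
  have gi: "integrable lborel (\<lambda>x. \<bar>g k x\<bar> powr p)" for k using gL by (simp add: Lp_set_def)
  have gb: "(\<integral>x. \<bar>g k x\<bar> powr p \<partial>lborel) \<le> B powr p * (1/4)^k" for k
  proof -
    have "(\<integral>x. \<bar>g k x\<bar> powr p \<partial>lborel) = Lp_dist p (c (Suc k)) (c k) powr p"
      unfolding g_def Lp_dist_powr[OF p] ..
    also have "\<dots> = Lp_dist p (c k) (c (Suc k)) powr p" by (simp add: Lp_dist_sym)
    also have "\<dots> \<le> (B * (1/4)^k) powr p" using p dc[of k] by (intro powr_mono2 Lp_dist_nonneg) auto
    also have "\<dots> = B powr p * ((1/4)^k) powr p" by (rule powr_mult)
    also have "\<dots> \<le> B powr p * (1/4)^k" using p by (intro mult_left_mono powr_le_self) (auto intro: power_le_one)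
    finally show ?thesis .
  qed
  have aes: "AE x in lborel. summable (\<lambda>k. \<bar>g k x\<bar>)"
    by (rule ae_summable[OF p gm gi gb]) simp
  define f where "f x = lim (\<lambda>k. c k x)" for x
  have fm[measurable]: "f \<in> borel_measurable lborel" unfolding f_def by (rule borel_measurable_lim_metric) (rule cm)
  have conv: "AE x in lborel. (\<lambda>k. c k x) \<longlonglongrightarrow> f x"
    using aes
  proof eventually_elim
    fix x assume "summable (\<lambda>k. \<bar>g k x\<bar>)"
    then have "summable (\<lambda>k. g k x)" by (rule summable_rabs_cancel)
    then have "(\<lambda>n. \<Sum>i<n. g i x) \<longlonglongrightarrow> (\<Sum>i. g i x)" by (rule summable_LIMSEQ)
    then have "(\<lambda>n. c 0 x + (\<Sum>i<n. g i x)) \<longlonglongrightarrow> c 0 x + (\<Sum>i. g i x)" by (intro tendsto_intros)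
    moreover have "c 0 x + (\<Sum>i<n. g i x) = c n x" for n by (induction n) (simp_all add: g_def)
    ultimately have "(\<lambda>n. c n x) \<longlonglongrightarrow> c 0 x + (\<Sum>i. g i x)" by simp
    then have "convergent (\<lambda>n. c n x)" by (rule convergentI)
    then show "(\<lambda>k. c k x) \<longlonglongrightarrow> f x" unfolding f_def by (simp add: convergent_LIMSEQ_iff)
  qed
  have fatou: "(\<integral>\<^sup>+x. ennreal (\<bar>f x - c k x\<bar> powr p) \<partial>lborel) \<le> ennreal ((2*B*(1/4)^k) powr p)" for k
  proof -
    define u where "u j x = ennreal (\<bar>c j x - c k x\<bar> powr p)" for j x
    have um: "u j \<in> borel_measurable lborel" for j unfolding u_def by measurable
    have "(\<integral>\<^sup>+x. ennreal (\<bar>f x - c k x\<bar> powr p) \<partial>lborel) = (\<integral>\<^sup>+x. liminf (\<lambda>j. u j x) \<partial>lborel)"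
    proof (rule nn_integral_cong_AE)
      show "AE x in lborel. ennreal (\<bar>f x - c k x\<bar> powr p) = liminf (\<lambda>j. u j x)"
        using conv
      proof eventually_elim
        fix x assume cx: "(\<lambda>j. c j x) \<longlonglongrightarrow> f x"
        have "(\<lambda>j. \<bar>c j x - c k x\<bar> powr p) \<longlonglongrightarrow> \<bar>f x - c k x\<bar> powr p"
          using p by (intro tendsto_powr2 tendsto_intros cx) auto
        then have "(\<lambda>j. u j x) \<longlonglongrightarrow> ennreal (\<bar>f x - c k x\<bar> powr p)"
          unfolding u_def by (rule tendsto_ennrealI)
        then show "ennreal (\<bar>f x - c k x\<bar> powr p) = liminf (\<lambda>j. u j x)"
          by (simp add: lim_imp_Liminf)
      qed
    qed
    also have "\<dots> \<le> liminf (\<lambda>j. integral\<^sup>N lborel (u j))" by (rule nn_integral_liminf[OF um])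
    also have "\<dots> \<le> limsup (\<lambda>j. integral\<^sup>N lborel (u j))" by (rule Liminf_le_Limsup) simp
    also have "\<dots> \<le> ennreal ((2*B*(1/4)^k) powr p)"
    proof (rule Limsup_bounded)
      show "\<forall>\<^sub>F j in sequentially. integral\<^sup>N lborel (u j) \<le> ennreal ((2*B*(1/4)^k) powr p)"
        unfolding eventually_sequentially
      proof (intro exI allI impI)
        fix j assume kj: "k \<le> j"
        have dL: "(\<lambda>x. c j x - c k x) \<in> Lp_set p" by (rule Lp_diff[OF p c c])
        have "integral\<^sup>N lborel (u j) = ennreal (\<integral>x. \<bar>c j x - c k x\<bar> powr p \<partial>lborel)"
          unfolding u_def using dL by (intro nn_integral_eq_integral) (auto simp: Lp_set_def)
        also have "(\<integral>x. \<bar>c j x - c k x\<bar> powr p \<partial>lborel) = Lp_dist p (c k) (c j) powr p"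
          by (simp add: Lp_dist_powr[OF p] Lp_dist_sym[of p "c k"])
        also have "\<dots> \<le> (2*B*(1/4)^k) powr p"
          using chain'[OF kj] p by (intro powr_mono2 Lp_dist_nonneg) auto
        finally show "integral\<^sup>N lborel (u j) \<le> ennreal ((2*B*(1/4)^k) powr p)"
          by (simp add: ennreal_leI)
      qed
    qed
    finally show ?thesis .
  qed
  have dint: "integrable lborel (\<lambda>x. \<bar>f x - c k x\<bar> powr p) \<and>
      (\<integral>x. \<bar>f x - c k x\<bar> powr p \<partial>lborel) \<le> (2*B*(1/4)^k) powr p" for k
  proof -
    have ii: "integrable lborel (\<lambda>x. \<bar>f x - c k x\<bar> powr p)"
    proof (rule integrableI_bounded)
      show "(\<integral>\<^sup>+x. ennreal (norm (\<bar>f x - c k x\<bar> powr p)) \<partial>lborel) < \<infinity>"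
        using fatou[of k] by (simp add: le_less_trans[OF _ ennreal_less_top])
    qed measurable
    have "ennreal (\<integral>x. \<bar>f x - c k x\<bar> powr p \<partial>lborel) \<le> ennreal ((2*B*(1/4)^k) powr p)"
      using fatou[of k] nn_integral_eq_integral[OF ii] by simp
    then show ?thesis using ii by (simp add: ennreal_le_iff)
  qed
  have fL: "f \<in> Lp_set p"
  proof -
    have "integrable lborel (\<lambda>x. 2 powr p * (\<bar>f x - c 0 x\<bar> powr p + \<bar>c 0 x\<bar> powr p))"
      using dint[of 0] ci[of 0] by (intro integrable_mult_right integrable_add) auto
    then have "integrable lborel (\<lambda>x. \<bar>f x\<bar> powr p)"
    proof (rule Bochner_Integration.integrable_bound)
      show "AE x in lborel. norm (\<bar>f x\<bar> powr p) \<le> norm (2 powr p * (\<bar>f x - c 0 x\<bar> powr p + \<bar>c 0 x\<bar> powr p))"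
      proof (intro AE_I2)
        fix x
        have "\<bar>(f x - c 0 x) + c 0 x\<bar> powr p \<le> 2 powr p * (\<bar>f x - c 0 x\<bar> powr p + \<bar>c 0 x\<bar> powr p)"
          by (rule pw_bound2[OF p])
        then show "norm (\<bar>f x\<bar> powr p) \<le> norm (2 powr p * (\<bar>f x - c 0 x\<bar> powr p + \<bar>c 0 x\<bar> powr p))"
          by simp
      qed
    qed measurable
    then show ?thesis using fm by (simp add: Lp_set_def)
  qed
  have "(\<lambda>k. Lp_dist p (c k) f) \<longlonglongrightarrow> 0"
  proof (rule Lim_null_comparison)
    show "(\<lambda>k. 2*B*(1/4::real)^k) \<longlonglongrightarrow> 0" by (intro tendsto_mult_right_zero LIMSEQ_power_zero) simp
    show "\<forall>\<^sub>F k in sequentially. norm (Lp_dist p (c k) f) \<le> 2*B*(1/4)^k"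
    proof (intro always_eventually allI)
      fix k
      have "Lp_dist p (c k) f = (\<integral>x. \<bar>f x - c k x\<bar> powr p \<partial>lborel) powr (1/p)"
        by (simp add: Lp_dist_def abs_minus_commute)
      also have "\<dots> \<le> ((2*B*(1/4)^k) powr p) powr (1/p)"
        using dint[of k] p by (intro powr_mono2 integral_nonneg_AE) auto
      also have "\<dots> = 2*B*(1/4)^k" using p B0 by (simp add: powr_powr)
      finally show "norm (Lp_dist p (c k) f) \<le> 2*B*(1/4)^k" by (simp add: Lp_dist_nonneg)
    qed
  qed
  then show ?thesis using fL by blast
qed

lemma wshift_pow: "(wshift w ^^ n) f = (\<lambda>t. (\<Prod>k<n. w (t + real k)) * f (t + real n))"
proof (induction n)
  case 0 then show ?case by simp
next
  case (Suc n)
  show ?case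
  proof
    fix t
    have e: "(\<Prod>k<Suc n. w (t + real k)) = w t * (\<Prod>k<n. w (t + 1 + real k))"
      by (subst prod.lessThan_Suc_shift) (simp add: algebra_simps)
    have "(wshift w ^^ Suc n) f t = w t * ((\<Prod>k<n. w (t + 1 + real k)) * f (t + 1 + real n))"
      by (simp add: Suc wshift_def)
    also have "\<dots> = (\<Prod>k<Suc n. w (t + real k)) * f (t + real (Suc n))"
      unfolding e by (simp add: algebra_simps)
    finally show "(wshift w ^^ Suc n) f t = (\<Prod>k<Suc n. w (t + real k)) * f (t + real (Suc n))" .
  qed
qed

lemma prod_rev:
  fixes w :: "real \<Rightarrow> real"
  shows "(\<Prod>k<n. w (s - real n + real k)) = (\<Prod>k=1..n. w (s - real k))"
proof -
  have "(\<Prod>k<n. w (s - real n + real k)) = (\<Prod>i<n. w (s - real n + real (n - Suc i)))"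
    by (rule prod.nat_diff_reindex[symmetric])
  also have "\<dots> = (\<Prod>i<n. w (s - real (Suc i)))"
    by (intro prod.cong refl arg_cong[where f=w]) (auto simp: of_nat_diff)
  also have "\<dots> = (\<Prod>k\<in>Suc ` {..<n}. w (s - real k))"
    by (subst prod.reindex) auto
  also have "Suc ` {..<n} = {1..n}" by (rule image_Suc_lessThan)
  finally show ?thesis .
qed

lemma wshift_Lp:
  fixes w :: "real \<Rightarrow> real"
  assumes p: "p \<ge> 1" and wm[measurable]: "w \<in> borel_measurable borel" and M: "\<And>t. \<bar>w t\<bar> \<le> M"
    and z: "z \<in> Lp_set p"
  shows "(wshift w ^^ n) z \<in> Lp_set p"
proof -
  have zm[measurable]: "z \<in> borel_measurable lborel" and zi: "integrable lborel (\<lambda>x. \<bar>z x\<bar> powr p)"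
    using z by (auto simp: Lp_set_def)
  have M0: "0 \<le> M" using M[of 0] by simp
  have zi0: "integrable lborel (\<lambda>x. \<bar>z (real n + 1 * x)\<bar> powr p)"
    using lborel_integrable_real_affine[OF zi, of 1 "real n"] by simp
  have "(\<lambda>x. \<bar>z (real n + 1 * x)\<bar> powr p) = (\<lambda>x. \<bar>z (x + real n)\<bar> powr p)"
    by (rule ext) (simp add: add.commute)
  then have zi': "integrable lborel (\<lambda>x. \<bar>z (x + real n)\<bar> powr p)" using zi0 by simp
  have m: "(\<lambda>t. (\<Prod>k<n. w (t + real k)) * z (t + real n)) \<in> borel_measurable lborel" by measurable
  have "integrable lborel (\<lambda>t. \<bar>(\<Prod>k<n. w (t + real k)) * z (t + real n)\<bar> powr p)"
  proof (rule Bochner_Integration.integrable_bound)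
    show "integrable lborel (\<lambda>x. (M^n) powr p * \<bar>z (x + real n)\<bar> powr p)"
      using zi' by (rule integrable_mult_right)
    show "AE x in lborel. norm (\<bar>(\<Prod>k<n. w (x + real k)) * z (x + real n)\<bar> powr p)
        \<le> norm ((M^n) powr p * \<bar>z (x + real n)\<bar> powr p)"
    proof (intro AE_I2)
      fix x
      have "\<bar>\<Prod>k<n. w (x + real k)\<bar> \<le> (\<Prod>k<n. M)"
        unfolding abs_prod by (intro prod_mono) (auto simp: M)
      then have "\<bar>\<Prod>k<n. w (x + real k)\<bar> \<le> M^n" by simp
      then have "\<bar>\<Prod>k<n. w (x + real k)\<bar> * \<bar>z (x + real n)\<bar> \<le> M^n * \<bar>z (x + real n)\<bar>"
        by (rule mult_right_mono) simp
      then have "\<bar>(\<Prod>k<n. w (x + real k)) * z (x + real n)\<bar> \<le> M^n * \<bar>z (x + real n)\<bar>"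
        by (simp only: abs_mult)
      then have "\<bar>(\<Prod>k<n. w (x + real k)) * z (x + real n)\<bar> powr p \<le> (M^n * \<bar>z (x + real n)\<bar>) powr p"
        using p by (intro powr_mono2) auto
      also have "\<dots> = (M^n) powr p * \<bar>z (x + real n)\<bar> powr p" by (rule powr_mult)
      finally have le: "\<bar>(\<Prod>k<n. w (x + real k)) * z (x + real n)\<bar> powr p
        \<le> (M^n) powr p * \<bar>z (x + real n)\<bar> powr p" .
      show "norm (\<bar>(\<Prod>k<n. w (x + real k)) * z (x + real n)\<bar> powr p)
        \<le> norm ((M^n) powr p * \<bar>z (x + real n)\<bar> powr p)"
        unfolding real_norm_def abs_of_nonneg[OF powr_ge_zero] by (rule order_trans[OF le abs_ge_self])
    qed
  qed (rule measurable_abs_powr[OF m])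
  then show ?thesis using m unfolding Lp_set_def wshift_pow by blast
qed


theorem mainTheorem16:
  fixes p :: real and w :: "real \<Rightarrow> real" and l :: int and N :: nat
  assumes "p \<ge> 1"
    and "continuous_on UNIV w"
    and "\<And>t. w t > 0"
    and "bounded (range w)"
    and "bounded (range (\<lambda>t. 1 / w t))"
    and "Inf {\<Prod>k = 1..n. w (t - real k) | t n. t \<in> {real_of_int l..real_of_int l + 1} \<and> n \<ge> 1} > 0"
    and "\<forall>n\<ge>N. (\<lambda>t. t + real n) ` {real_of_int l..real_of_int l + 1} \<inter> {real_of_int l..real_of_int l + 1} = {}"
  shows "\<not> sigma_porous (Lp_dist p) (Lp_set p)
           {f \<in> Lp_set p. \<forall>n\<ge>N.
              Lp_dist p ((wshift w ^^ n) f) (indicator {real_of_int l..real_of_int l + 1}) \<ge> 1}"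
proof -
  note p = assms(1)
  define I where "I = {real_of_int l..real_of_int l + 1}"
  define S where "S = {\<Prod>k = 1..n. w (t - real k) | t n. t \<in> I \<and> n \<ge> 1}"
  define \<beta> where "\<beta> = Inf S"
  have \<beta>: "0 < \<beta>" using assms(6) unfolding \<beta>_def S_def I_def .
  have wm[measurable]: "w \<in> borel_measurable borel" by (rule borel_measurable_continuous_onI[OF assms(2)])
  obtain M where M: "\<And>t. \<bar>w t\<bar> \<le> M" using assms(4) unfolding bounded_iff by auto
  have prodge: "\<beta> \<le> (\<Prod>k = 1..n. w (s - real k))" if s: "s \<in> I" and n: "n \<ge> 1" for s n
  proof -
    have mem: "(\<Prod>k = 1..n. w (s - real k)) \<in> S" unfolding S_def using s n by blast
    have "bdd_below S"
    proof (rule bdd_belowI)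
      fix x assume "x \<in> S"
      then show "0 \<le> x" unfolding S_def by (auto intro!: prod_nonneg intro: less_imp_le[OF assms(3)])
    qed
    then show ?thesis unfolding \<beta>_def using mem by (rule cInf_lower[rotated])
  qed
  have Nn: "1 \<le> n \<and> (\<forall>x. x + real n \<in> I \<longrightarrow> x \<notin> I)" if n: "N \<le> n" for n
  proof -
    have disj: "(\<lambda>t. t + real n) ` I \<inter> I = {}" using assms(7) n unfolding I_def by blast
    have "real_of_int l \<in> I" unfolding I_def by simp
    then have "n \<noteq> 0" using disj by auto
    moreover have "x \<notin> I" if "x + real n \<in> I" for x
    proof
      assume "x \<in> I"
      then have "x + real n \<in> (\<lambda>t. t + real n) ` I \<inter> I" using that by blast
      then show False using disj by blast
    qed
    ultimately show ?thesis by auto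
  qed
  define K where "K = 1 + 1/\<beta>"
  have "0 < 1/\<beta>" using \<beta> by simp
  then have K: "0 < K" unfolding K_def by linarith
  define h0 where "h0 = (\<lambda>s. K * indicator I s)"
  have I_sets: "I \<in> sets lborel" unfolding I_def by simp
  have indI: "integrable lborel (indicator I :: real \<Rightarrow> real)" unfolding I_def by simp
  have measI: "measure lborel I = 1" unfolding I_def by simp
  have h0pow: "\<bar>h0 s\<bar> powr p = K powr p * indicator I s" for s
    unfolding h0_def using K by (auto split: split_indicator)
  have h0L: "h0 \<in> Lp_set p"
  proof -
    have i: "integrable lborel (\<lambda>s. \<bar>h0 s\<bar> powr p)" unfolding h0pow by (intro integrable_mult_right indI)
    have m: "h0 \<in> borel_measurable lborel" unfolding h0_def I_def by simp
    show ?thesis unfolding Lp_set_def using i m by blast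
  qed
  have indL: "(indicator I :: real \<Rightarrow> real) \<in> Lp_set p"
  proof -
    have e: "\<bar>indicator I s :: real\<bar> powr p = indicator I s" for s using p by (auto split: split_indicator)
    have i: "integrable lborel (\<lambda>s. \<bar>indicator I s :: real\<bar> powr p)" unfolding e by (rule indI)
    have m: "(indicator I :: real \<Rightarrow> real) \<in> borel_measurable lborel" unfolding I_def by simp
    show ?thesis unfolding Lp_set_def using i m by blast
  qed
  have Nh0: "Np p h0 = K"
  proof -
    have "(\<integral>x. \<bar>h0 x\<bar> powr p \<partial>lborel) = K powr p" unfolding h0pow using measI I_sets by simp
    then show ?thesis unfolding Np_def using K p by (simp add: powr_powr)
  qed
  have key: "z \<in> {f \<in> Lp_set p. \<forall>n\<ge>N. Lp_dist p ((wshift w ^^ n) f) (indicator I) \<ge> 1}"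
    if zL: "z \<in> Lp_set p" and zd: "Lp_dist p h0 z < 1" for z
  proof -
    have zm[measurable]: "z \<in> borel_measurable lborel" and zi: "integrable lborel (\<lambda>x. \<bar>z x\<bar> powr p)"
      using zL by (auto simp: Lp_set_def)
    define zI where "zI = (\<lambda>s. indicator I s * z s)"
    have zIpow: "\<bar>zI s\<bar> powr p = indicator I s * \<bar>z s\<bar> powr p" for s
      unfolding zI_def by (auto split: split_indicator)
    have zIi: "integrable lborel (\<lambda>s. \<bar>zI s\<bar> powr p)"
      unfolding zIpow using integrable_mult_indicator[OF I_sets zi] by simp
    have zIL: "zI \<in> Lp_set p" unfolding Lp_set_def using zIi I_sets by (auto simp: zI_def)
    have "Np p (\<lambda>s. h0 s - zI s) \<le> Lp_dist p h0 z"
    proof -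
      have "(\<integral>x. \<bar>h0 x - zI x\<bar> powr p \<partial>lborel) \<le> (\<integral>x. \<bar>h0 x - z x\<bar> powr p \<partial>lborel)"
      proof (rule integral_mono)
        show "integrable lborel (\<lambda>x. \<bar>h0 x - zI x\<bar> powr p)"
          using Lp_diff[OF p h0L zIL] by (simp add: Lp_set_def)
        show "integrable lborel (\<lambda>x. \<bar>h0 x - z x\<bar> powr p)"
          using Lp_diff[OF p h0L zL] by (simp add: Lp_set_def)
        fix x show "\<bar>h0 x - zI x\<bar> powr p \<le> \<bar>h0 x - z x\<bar> powr p"
          unfolding h0_def zI_def by (auto split: split_indicator)
      qed
      then show ?thesis unfolding Np_def Lp_dist_def using p
        by (intro powr_mono2 integral_nonneg_AE) auto
    qed
    moreover have "Np p h0 \<le> Np p (\<lambda>s. h0 s - zI s) + Np p zI"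
      using minkowski(2)[OF p Lp_diff[OF p h0L zIL] zIL] by simp
    ultimately have NzI: "1/\<beta> < Np p zI" using zd Nh0 unfolding K_def by linarith
    define J where "J = (\<integral>x. \<bar>zI x\<bar> powr p \<partial>lborel)"
    have J: "1 \<le> \<beta> powr p * J"
    proof -
      have "1 < \<beta> * Np p zI" using NzI \<beta> by (simp add: field_simps)
      then have "1 powr p \<le> (\<beta> * Np p zI) powr p" using p by (intro powr_mono2) auto
      also have "\<dots> = \<beta> powr p * J" unfolding powr_mult J_def Np_powr[OF p] ..
      finally show ?thesis by simp
    qed
    show ?thesis
    proof (intro CollectI conjI allI impI zL)
      fix n assume nN: "N \<le> n"
      have n1: "1 \<le> n" and offI: "\<And>x. x + real n \<in> I \<Longrightarrow> x \<notin> I" using Nn[OF nN] by auto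
      define Tn where "Tn = (wshift w ^^ n) z"
      have TnL: "Tn \<in> Lp_set p" unfolding Tn_def by (rule wshift_Lp[OF p wm M zL])
      have Di: "integrable lborel (\<lambda>x. \<bar>Tn x - indicator I x\<bar> powr p)"
        using Lp_diff[OF p TnL indL] by (simp add: Lp_set_def)
      define G where "G x = \<beta> powr p * \<bar>zI (x + real n)\<bar> powr p" for x
      have Gi: "integrable lborel G"
      proof -
        have "integrable lborel (\<lambda>x. \<bar>zI (real n + 1 * x)\<bar> powr p)"
          using lborel_integrable_real_affine[OF zIi, of 1 "real n"] by simp
        moreover have "(\<lambda>x. \<bar>zI (real n + 1 * x)\<bar> powr p) = (\<lambda>x. \<bar>zI (x + real n)\<bar> powr p)"
          by (rule ext) (simp add: add.commute)
        ultimately show ?thesis unfolding G_def by (intro integrable_mult_right) simp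
      qed
      have GJ: "integral\<^sup>L lborel G = \<beta> powr p * J"
      proof -
        have "J = \<bar>1::real\<bar> *\<^sub>R (\<integral>x. \<bar>zI (real n + 1 * x)\<bar> powr p \<partial>lborel)"
          unfolding J_def by (rule lborel_integral_real_affine) simp
        also have "(\<lambda>x. \<bar>zI (real n + 1 * x)\<bar> powr p) = (\<lambda>x. \<bar>zI (x + real n)\<bar> powr p)"
          by (rule ext) (simp add: add.commute)
        finally have "J = (\<integral>x. \<bar>zI (x + real n)\<bar> powr p \<partial>lborel)" by simp
        then show ?thesis unfolding G_def by simp
      qed
      have GD: "G x \<le> \<bar>Tn x - indicator I x\<bar> powr p" for x
      proof (cases "x + real n \<in> I")
        case True
        then have xI: "x \<notin> I" using offI by blast
        define P where "P = (\<Prod>k<n. w (x + real k))"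
        have TnX: "Tn x = P * z (x + real n)" unfolding Tn_def P_def wshift_pow by simp
        have "P = (\<Prod>k<n. w ((x + real n) - real n + real k))" unfolding P_def by simp
        also have "\<dots> = (\<Prod>k = 1..n. w ((x + real n) - real k))" by (rule prod_rev)
        finally have "\<beta> \<le> P" using prodge[OF True n1] by simp
        then have bp: "\<beta> powr p \<le> \<bar>P\<bar> powr p" using \<beta> p by (intro powr_mono2) auto
        have "G x = \<beta> powr p * \<bar>z (x + real n)\<bar> powr p" unfolding G_def zI_def using True by simp
        also have "\<dots> \<le> \<bar>P\<bar> powr p * \<bar>z (x + real n)\<bar> powr p" using bp by (rule mult_right_mono) simp
        also have "\<dots> = \<bar>Tn x - indicator I x\<bar> powr p" using xI unfolding TnX by (simp add: abs_mult powr_mult)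
        finally show ?thesis .
      next
        case False
        then show ?thesis unfolding G_def zI_def by simp
      qed
      have "1 \<le> integral\<^sup>L lborel G" using J GJ by simp
      also have "\<dots> \<le> (\<integral>x. \<bar>Tn x - indicator I x\<bar> powr p \<partial>lborel)"
        by (rule integral_mono[OF Gi Di GD])
      finally have "1 powr (1/p) \<le> (\<integral>x. \<bar>Tn x - indicator I x\<bar> powr p \<partial>lborel) powr (1/p)"
        using p by (intro powr_mono2) auto
      then show "1 \<le> Lp_dist p ((wshift w ^^ n) z) (indicator I)"
        unfolding Lp_dist_def Tn_def by simp
    qed
  qed
  have "\<not> sigma_porous (Lp_dist p) (Lp_set p)
           {f \<in> Lp_set p. \<forall>n\<ge>N. Lp_dist p ((wshift w ^^ n) f) (indicator I) \<ge> 1}"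
  proof (rule baire_porous[where c = h0 and r = 1])
    show "\<And>x. x \<in> Lp_set p \<Longrightarrow> Lp_dist p x x = 0" by (rule Lp_dist_self)
    show "\<And>x y. x \<in> Lp_set p \<Longrightarrow> y \<in> Lp_set p \<Longrightarrow> 0 \<le> Lp_dist p x y" by (rule Lp_dist_nonneg)
    show "\<And>x y z. x \<in> Lp_set p \<Longrightarrow> y \<in> Lp_set p \<Longrightarrow> z \<in> Lp_set p \<Longrightarrow>
        Lp_dist p x z \<le> Lp_dist p x y + Lp_dist p y z" by (rule Lp_tri[OF p])
    show "\<And>c B. (\<And>k. c k \<in> Lp_set p) \<Longrightarrow> (\<And>k. Lp_dist p (c k) (c (Suc k)) \<le> B * (1/4)^k)
        \<Longrightarrow> \<exists>x\<in>Lp_set p. (\<lambda>k. Lp_dist p (c k) x) \<longlonglongrightarrow> 0"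
      by (rule Lp_complete[OF p])
    show "h0 \<in> Lp_set p" by (rule h0L)
    show "(0::real) < 1" by simp
    show "\<And>z. z \<in> Lp_set p \<Longrightarrow> Lp_dist p h0 z < 1 \<Longrightarrow>
        z \<in> {f \<in> Lp_set p. \<forall>n\<ge>N. Lp_dist p ((wshift w ^^ n) f) (indicator I) \<ge> 1}"
      by (rule key)
  qed
  then show ?thesis unfolding I_def .
qed

end
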